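(* Let $d$ and $k$ be positive integers with $k\le d$. The number of $312$-avoiding affine permutations in $\widetilde{\mathfrak S}_d$ that have exactly $k$ cut points modulo $d$ is $\binom{2d-k-1}{d-1}$.
   Context: An affine permutation $\pi\in\widetilde{\mathfrak S}_d$ is a bijection $\pi:\mathbb Z\to\mathbb Z$ such that $\pi(i+d)=\pi(i)+d$ for all $i\in\mathbb Z$ and $\sum_{i=0}^{d-1}(\pi(i)-i)=0$. It is $312$-avoiding if there are no integers $i<j<k$ with $\pi(j)<\pi(k)<\pi(i)$. A cut point of $\pi$ is an integer $j$ such that $\pi(i)<\pi(k)$ for all integers $i\le j<k$. If $j$ is a cut point then so is every integer congruent to $j$ modulo $d$; "number of cut points modulo $d$" means the number of residue classes modulo $d$ consisting of cut points. *)

theory Defs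
  imports Main
begin

definition affine_perm :: "nat \<Rightarrow> (int \<Rightarrow> int) \<Rightarrow> bool" where
  "affine_perm d \<pi> \<longleftrightarrow> bij \<pi> \<and> (\<forall>i. \<pi> (i + int d) = \<pi> i + int d)
     \<and> (\<Sum>i\<in>{0..<int d}. \<pi> i - i) = 0"

definition avoids312 :: "(int \<Rightarrow> int) \<Rightarrow> bool" where
  "avoids312 \<pi> \<longleftrightarrow> \<not> (\<exists>i j k. i < j \<and> j < k \<and> \<pi> j < \<pi> k \<and> \<pi> k < \<pi> i)"

definition cut_point :: "(int \<Rightarrow> int) \<Rightarrow> int \<Rightarrow> bool" where
  "cut_point \<pi> j \<longleftrightarrow> (\<forall>i k. i \<le> j \<and> j < k \<longrightarrow> \<pi> i < \<pi> k)"

text \<open>Number of residue classes mod d consisting of cut points.\<close>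
definition num_cut_points :: "nat \<Rightarrow> (int \<Rightarrow> int) \<Rightarrow> nat" where
  "num_cut_points d \<pi> = card {r \<in> {0..<int d}. cut_point \<pi> r}"

end

theory Submission
  imports Defs "HOL-Computational_Algebra.Formal_Power_Series"
begin

unbundle fps_syntax


definition av :: "int list \<Rightarrow> bool" where
  "av s \<longleftrightarrow> \<not> (\<exists>i j l. i < j \<and> j < l \<and> l < length s \<and> s!j < s!l \<and> s!l < s!i)"
definition isperm :: "nat \<Rightarrow> int list \<Rightarrow> bool" where
  "isperm n s \<longleftrightarrow> distinct s \<and> set s = {0..<int n}"
definition Av :: "nat \<Rightarrow> int list set" where
  "Av n = {s. isperm n s \<and> av s}"
definition lcut :: "int list \<Rightarrow> nat \<Rightarrow> bool" where
  "lcut s j \<longleftrightarrow> (\<forall>i l. i < j \<and> j \<le> l \<and> l < length s \<longrightarrow> s!i < s!l)"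
definition cuts :: "int list \<Rightarrow> nat" where
  "cuts s = card {j\<in>{1..length s}. lcut s j}"
definition Phi :: "nat \<Rightarrow> int list \<Rightarrow> int list \<Rightarrow> int list" where
  "Phi p a b = map (\<lambda>x. x+1) a @ [0] @ map (\<lambda>x. x + int p) b"

lemma isperm_length: "isperm n s \<Longrightarrow> length s = n"
  unfolding isperm_def using distinct_card[of s] by auto

lemma finite_Av: "finite (Av n)"
proof -
  have "Av n \<subseteq> {s. set s \<subseteq> {0..<int n} \<and> length s = n}"
    unfolding Av_def using isperm_length by (auto simp: isperm_def)
  moreover have "finite {s. set s \<subseteq> {0..<int n} \<and> length s = n}"
    by (rule finite_lists_length_eq) simp
  ultimately show ?thesis by (rule finite_subset)
qed

lemma av_shift: "av (map (\<lambda>x. x + c) s) \<longleftrightarrow> av s"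
  unfolding av_def by auto

lemma av_appendD: "av (u @ w) \<Longrightarrow> av u \<and> av w"
proof -
  assume h: "av (u @ w)"
  have "av u"
    unfolding av_def
  proof
    assume "\<exists>i j l. i < j \<and> j < l \<and> l < length u \<and> u!j < u!l \<and> u!l < u!i"
    then obtain i j l where *: "i < j" "j < l" "l < length u" "u!j < u!l" "u!l < u!i" by blast
    have "(u@w)!i = u!i" "(u@w)!j = u!j" "(u@w)!l = u!l" "l < length (u@w)" using * by (simp_all add: nth_append)
    then show False using h * unfolding av_def by (metis (no_types))
  qed
  moreover have "av w"
    unfolding av_def
  proof
    assume "\<exists>i j l. i < j \<and> j < l \<and> l < length w \<and> w!j < w!l \<and> w!l < w!i"
    then obtain i j l where *: "i < j" "j < l" "l < length w" "w!j < w!l" "w!l < w!i" by blast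
    have "(u@w)!(length u + j) < (u@w)!(length u + l)" "(u@w)!(length u + l) < (u@w)!(length u + i)"
      using * by (simp_all add: nth_append)
    moreover have "length u + i < length u + j" "length u + j < length u + l" "length u + l < length (u@w)"
      using * by simp_all
    ultimately show False using h unfolding av_def by blast
  qed
  ultimately show ?thesis by blast
qed

lemma av_append:
  assumes "av u" "av w" "\<And>x y. x \<in> set u \<Longrightarrow> y \<in> set w \<Longrightarrow> x < y"
  shows "av (u @ w)"
  unfolding av_def
proof
  assume "\<exists>i j l. i < j \<and> j < l \<and> l < length (u@w) \<and> (u@w)!j < (u@w)!l \<and> (u@w)!l < (u@w)!i"
  then obtain i j l where *: "i < j" "j < l" "l < length (u@w)" "(u@w)!j < (u@w)!l" "(u@w)!l < (u@w)!i"
    by blast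
  show False
  proof (cases "l < length u")
    case True
    then show False using * assms(1) unfolding av_def by (auto simp: nth_append)
  next
    case False
    show False
    proof (cases "i < length u")
      case True
      then have "(u@w)!i \<in> set u" "(u@w)!l \<in> set w" using False * by (auto simp: nth_append)
      then show False using assms(3) * by fastforce
    next
      case False2: False
      let ?i = "i - length u" and ?j = "j - length u" and ?l = "l - length u"
      have "?i < ?j" "?j < ?l" "?l < length w" "w!?j < w!?l" "w!?l < w!?i"
        using * False2 by (auto simp: nth_append)
      then show False using assms(2) unfolding av_def by blast
    qed
  qed
qed

lemma av_snoc:
  assumes "av u" "\<And>x. x \<in> set u \<Longrightarrow> z < x"
  shows "av (u @ [z])"
  unfolding av_def
proof
  assume "\<exists>i j l. i < j \<and> j < l \<and> l < length (u@[z]) \<and> (u@[z])!j < (u@[z])!l \<and> (u@[z])!l < (u@[z])!i"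
  then obtain i j l where *: "i < j" "j < l" "l < length (u@[z])" "(u@[z])!j < (u@[z])!l" "(u@[z])!l < (u@[z])!i"
    by blast
  show False
  proof (cases "l < length u")
    case True
    then show False using * assms(1) unfolding av_def by (auto simp: nth_append)
  next
    case False
    then have "l = length u" using * by simp
    then have "(u@[z])!l = z" "(u@[z])!j = u!j" "j < length u" using * by (auto simp: nth_append)
    then show False using * assms(2)[of "u!j"] by auto
  qed
qed

lemma Phi_length: "length (Phi p a b) = length a + 1 + length b"
  by (simp add: Phi_def)

lemma Phi_nth:
  assumes "length a = p - 1" "1 \<le> p" "i < p + length b"
  shows "Phi p a b ! i = (if i < p-1 then a!i + 1 else if i = p-1 then 0 else b!(i-p) + int p)"
  using assms by (auto simp: Phi_def nth_append nth_Cons' intro!: arg_cong[where f="(!) b"])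

lemma Phi_mem:
  assumes p: "1 \<le> p" "p \<le> n" and a: "a \<in> Av (p-1)" and b: "b \<in> Av (n-p)"
  shows "Phi p a b \<in> Av n"
proof -
  have la: "length a = p-1" and lb: "length b = n-p"
    using a b isperm_length by (auto simp: Av_def)
  have sa: "set (map (\<lambda>x. x+1) a) = {1..<int p}" using a p by (auto simp: Av_def isperm_def)
  have sb: "set (map (\<lambda>x. x + int p) b) = {int p..<int n}" using b p by (auto simp: Av_def isperm_def)
  have d1: "distinct (map (\<lambda>x. x+1) a)" using a by (auto simp: Av_def isperm_def distinct_map inj_on_def)
  have d2: "distinct (map (\<lambda>x. x + int p) b)" using b by (auto simp: Av_def isperm_def distinct_map inj_on_def)
  have "distinct (Phi p a b)" unfolding Phi_def using d1 d2 sa sb p by auto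
  moreover have "set (Phi p a b) = {0..<int n}" unfolding Phi_def using sa sb p by auto
  moreover have "av (Phi p a b)"
  proof -
    have "av (map (\<lambda>x. x+1) a @ [0])"
      by (rule av_snoc) (use a sa in \<open>auto simp: Av_def av_shift\<close>)
    moreover have "av (map (\<lambda>x. x + int p) b)" using b by (simp add: Av_def av_shift)
    ultimately have "av ((map (\<lambda>x. x+1) a @ [0]) @ map (\<lambda>x. x + int p) b)"
      by (rule av_append) (use sa sb p in auto)
    then show ?thesis by (simp add: Phi_def)
  qed
  ultimately show ?thesis by (simp add: Av_def isperm_def)
qed

lemma Phi_inj:
  assumes "1 \<le> p" "length a = p - 1" "1 \<le> p'" "length a' = p' - 1"
    and "\<forall>x\<in>set a. 0 \<le> x" "\<forall>x\<in>set a'. 0 \<le> x" "\<forall>x\<in>set b. 0 \<le> x"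
    and eq: "Phi p a b = Phi p' a' b'"
  shows "p = p' \<and> a = a' \<and> b = b'"
proof -
  have z: "0 \<notin> set (map (\<lambda>x. x+1) a)" "0 \<notin> set (map (\<lambda>x. x + int p) b)" using assms by auto
  have eq2: "map (\<lambda>x. x+1) a @ 0 # map (\<lambda>x. x + int p) b = map (\<lambda>x. x+1) a' @ 0 # map (\<lambda>x. x + int p') b'"
    using eq unfolding Phi_def by simp
  have e: "map (\<lambda>x. x+1) a = map (\<lambda>x. x+1) a'" "map (\<lambda>x. x + int p) b = map (\<lambda>x. x + int p') b'"
    using append_Cons_eq_iff[OF z, THEN iffD1, OF eq2] by auto
  have "length a = length a'" using arg_cong[OF e(1), of length] by simp
  then have pp: "p = p'" using assms(1-4) by simp
  have "inj (\<lambda>x::int. x+1)" "inj (\<lambda>x::int. x + int p)" by (simp_all add: inj_def)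
  then have "a = a'" "b = b'" using e pp by (simp_all only: inj_map_eq_map)
  then show ?thesis using pp by simp
qed

lemma av_sep:
  assumes "av (u @ z # w)" "x \<in> set u" "y \<in> set w" "z < y"
  shows "\<not> y < x"
proof
  assume yx: "y < x"
  obtain i where i: "i < length u" "u!i = x" using assms(2) by (auto simp: in_set_conv_nth)
  obtain l where l: "l < length w" "w!l = y" using assms(3) by (auto simp: in_set_conv_nth)
  let ?s = "u @ z # w"
  have "i < length u" "length u < length u + 1 + l" "length u + 1 + l < length ?s"
    "?s!(length u) < ?s!(length u + 1 + l)" "?s!(length u + 1 + l) < ?s!i"
    using i l assms yx by (auto simp: nth_append)
  then show False using assms(1) unfolding av_def by blast
qed

lemma card_int_interval_le:
  fixes x :: int and U :: "int set"
  assumes "{1..x} \<subseteq> U" "finite U"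
  shows "x \<le> int (card U)"
proof -
  have "card {1..x} \<le> card U" using assms by (rule card_mono[rotated])
  then show ?thesis by simp
qed

lemma Phi_surj:
  assumes s: "s \<in> Av n" and n: "1 \<le> n"
  shows "\<exists>p a b. 1 \<le> p \<and> p \<le> n \<and> a \<in> Av (p-1) \<and> b \<in> Av (n-p) \<and> s = Phi p a b"
proof -
  have ls: "length s = n" and ds: "distinct s" and ss: "set s = {0..<int n}" and as: "av s"
    using s isperm_length by (auto simp: Av_def isperm_def)
  have "0 \<in> set s" using ss n by auto
  then obtain q where q: "q < length s" "s!q = 0" by (auto simp: in_set_conv_nth)
  define u where "u = take q s"
  define w where "w = drop (Suc q) s"
  have sd: "s = u @ 0 # w" unfolding u_def w_def using id_take_nth_drop[OF q(1)] q by simp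
  have lu: "length u = q" using q by (simp add: u_def)
  have lw: "length w = n - q - 1" using q ls by (simp add: w_def)
  have du: "distinct u" and dw: "distinct w" and z: "0 \<notin> set u" "0 \<notin> set w"
    and disj: "set u \<inter> set w = {}"
    using ds by (simp_all add: sd)
  have "set u \<union> set w = set s - {0}" using z sd by auto
  also have "\<dots> = {1..<int n}" using ss by auto
  finally have un: "set u \<union> set w = {1..<int n}" .
  have avs: "av (u @ 0 # w)" using as sd by simp
  have sep: "x < y" if "x \<in> set u" "y \<in> set w" for x y
  proof -
    have "0 \<le> y" "y \<noteq> 0" "x \<noteq> y" using that un z disj by auto
    then show ?thesis using av_sep[OF avs that] by simp
  qed
  have su: "set u = {1..int q}"
  proof -
    have "set u \<subseteq> {1..int q}"
    proof
      fix x assume x: "x \<in> set u"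
      have "{1..x} \<subseteq> set u"
      proof
        fix v assume v: "v \<in> {1..x}"
        have "x < int n" using x un by auto
        then have "v \<in> set u \<union> set w" using v un by auto
        moreover have "v \<notin> set w" using sep[OF x] v by fastforce
        ultimately show "v \<in> set u" by blast
      qed
      then have "x \<le> int (card (set u))" by (rule card_int_interval_le) simp
      then show "x \<in> {1..int q}" using x un du lu distinct_card[OF du] by auto
    qed
    moreover have "card (set u) = card {1..int q}" using distinct_card[OF du] lu by simp
    ultimately show ?thesis by (intro card_subset_eq) auto
  qed
  have "set w = (set u \<union> set w) - set u" using disj by auto
  also have "\<dots> = {1..<int n} - {1..int q}" using un su by simp
  also have "\<dots> = {int q + 1..<int n}" by auto
  finally have sw: "set w = {int q + 1..<int n}" .
  define a where "a = map (\<lambda>x. x + (-1)) u"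
  define b where "b = map (\<lambda>x. x + (- (int q + 1))) w"
  have ua: "u = map (\<lambda>x. x + 1) a" by (simp add: a_def comp_def)
  have wb: "w = map (\<lambda>x. x + int (q+1)) b" by (simp add: b_def comp_def)
  have "a \<in> Av q"
  proof -
    have "set a = {0..<int q}" unfolding a_def using su by auto
    moreover have "distinct a" unfolding a_def using du by (simp add: distinct_map inj_on_def)
    moreover have "av a"
    proof -
      have "av u" using av_appendD[of u "0 # w"] avs by blast
      then show ?thesis unfolding a_def using av_shift[of "-1" u] by simp
    qed
    ultimately show ?thesis by (simp add: Av_def isperm_def)
  qed
  moreover have "b \<in> Av (n - (q+1))"
  proof -
    have "set b = {0..<int (n - (q+1))}" unfolding b_def using sw q ls by auto
    moreover have "distinct b" unfolding b_def using dw by (simp add: distinct_map inj_on_def)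
    moreover have "av b"
    proof -
      have "av w" using av_appendD[of "u @ [0]" "w"] avs by simp
      then show ?thesis unfolding b_def using av_shift[of "- (int q + 1)" w] by simp
    qed
    ultimately show ?thesis by (simp add: Av_def isperm_def)
  qed
  moreover have "s = Phi (q+1) a b" unfolding Phi_def using sd ua wb by simp
  ultimately show ?thesis using q ls by (intro exI[of _ "q+1"]) auto
qed

lemma Av_vals: "s \<in> Av n \<Longrightarrow> x \<in> set s \<Longrightarrow> 0 \<le> x \<and> x < int n"
  by (auto simp: Av_def isperm_def)

lemma Av_len: "s \<in> Av n \<Longrightarrow> length s = n"
  by (auto simp: Av_def isperm_length)

lemma lcut_Phi:
  assumes a: "a \<in> Av (p-1)" and b: "b \<in> Av m" and p: "1 \<le> p" and j: "1 \<le> j"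
  shows "lcut (Phi p a b) j \<longleftrightarrow> p \<le> j \<and> lcut b (j - p)"
proof -
  have la: "length a = p - 1" using Av_len[OF a] .
  have lb: "length b = m" using Av_len[OF b] .
  let ?s = "Phi p a b"
  have ls: "length ?s = p + m" using la lb p by (simp add: Phi_length)
  have nth: "?s ! i = (if i < p-1 then a!i + 1 else if i = p-1 then 0 else b!(i-p) + int p)" if "i < p + m" for i
    using Phi_nth[OF la p] that lb by simp
  have av: "0 \<le> a!i \<and> a!i < int (p-1)" if "i < p - 1" for i using Av_vals[OF a, of "a!i"] that la by simp
  have bv: "0 \<le> b!i" if "i < m" for i using Av_vals[OF b, of "b!i"] that lb by simp
  show ?thesis
  proof
    assume c: "lcut ?s j"
    have pj: "p \<le> j"
    proof (rule ccontr)
      assume "\<not> p \<le> j"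
      then have "0 < j" "j \<le> p - 1" "p - 1 < p + m" using j by auto
      then have "?s!0 < ?s!(p-1)" using c unfolding lcut_def ls by blast
      moreover have "1 < p" using \<open>j \<le> p-1\<close> j by auto
      moreover have "?s!0 = a!0 + 1" "?s!(p-1) = 0" using nth[of 0] nth[of "p-1"] \<open>1 < p\<close> by auto
      ultimately show False using av[of 0] \<open>j \<le> p-1\<close> j by auto
    qed
    moreover have "lcut b (j - p)"
      unfolding lcut_def
    proof (intro allI impI)
      fix i l assume h: "i < j - p \<and> j - p \<le> l \<and> l < length b"
      then have "i + p < j" "j \<le> l + p" "l + p < length ?s" using pj ls lb by auto
      then have "?s!(i+p) < ?s!(l+p)" using c unfolding lcut_def by blast
      moreover have "\<not> (i+p < p-1)" "i+p \<noteq> p-1" "\<not>(l+p<p-1)" "l+p \<noteq> p-1" using p by auto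
      ultimately show "b!i < b!l" using nth[of "i+p"] nth[of "l+p"] h lb p
        by (simp del: One_nat_def)
    qed
    ultimately show "p \<le> j \<and> lcut b (j - p)" by blast
  next
    assume h: "p \<le> j \<and> lcut b (j - p)"
    show "lcut ?s j"
      unfolding lcut_def
    proof (intro allI impI)
      fix i l assume il: "i < j \<and> j \<le> l \<and> l < length ?s"
      have sl: "?s!l = b!(l-p) + int p" using nth[of l] il ls h p by auto
      show "?s!i < ?s!l"
      proof (cases "i < p")
        case True
        have "?s!i < int p" using nth[of i] il ls True av[of i] by auto
        moreover have "l - p < m" using il ls h by auto
        ultimately show ?thesis using sl bv[of "l-p"] by linarith
      next
        case False
        have "?s!i = b!(i-p) + int p" using nth[of i] il ls False p by auto
        moreover have "b!(i-p) < b!(l-p)"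
        proof -
          have "i - p < j - p" "j - p \<le> l - p" "l - p < length b" using il False ls lb h by auto
          then show ?thesis using h unfolding lcut_def by blast
        qed
        ultimately show ?thesis using sl by simp
      qed
    qed
  qed
qed

lemma lcut0: "lcut s 0" by (simp add: lcut_def)

lemma cuts_Phi:
  assumes a: "a \<in> Av (p-1)" and b: "b \<in> Av m" and p: "1 \<le> p"
  shows "cuts (Phi p a b) = Suc (cuts b)"
proof -
  have ls: "length (Phi p a b) = p + m" using Av_len[OF a] Av_len[OF b] p by (simp add: Phi_length)
  have "{j\<in>{1..length (Phi p a b)}. lcut (Phi p a b) j} = (\<lambda>j'. j' + p) ` {j'\<in>{0..m}. lcut b j'}"
  proof -
    have "{j\<in>{1..p+m}. lcut (Phi p a b) j} = {j\<in>{1..p+m}. p \<le> j \<and> lcut b (j - p)}"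
      using lcut_Phi[OF a b p] by auto
    also have "\<dots> = (\<lambda>j'. j' + p) ` {j'\<in>{0..m}. lcut b j'}"
      using p apply (auto simp: image_iff) apply (rule_tac x="x-p" in exI) by auto
    finally show ?thesis using ls by simp
  qed
  then have "cuts (Phi p a b) = card {j'\<in>{0..m}. lcut b j'}"
    unfolding cuts_def by (simp add: card_image inj_on_def)
  also have "{j'\<in>{0..m}. lcut b j'} = insert 0 {j'\<in>{1..m}. lcut b j'}" using lcut0 by auto
  also have "card \<dots> = Suc (cuts b)" unfolding cuts_def using Av_len[OF b] by simp
  finally show ?thesis .
qed

lemma nocut_Phi:
  assumes a: "a \<in> Av (p-1)" and b: "b \<in> Av m" and p: "1 \<le> p" and t: "1 \<le> t"
  shows "(\<forall>j\<in>{1..<t}. \<not> lcut (Phi p a b) j) \<longleftrightarrow> t \<le> p"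
  using lcut_Phi[OF a b p] lcut0 p t by (auto simp: not_le)

lemma count_Phi:
  assumes n: "1 \<le> n"
    and R: "\<And>p a b. 1 \<le> p \<Longrightarrow> p \<le> n \<Longrightarrow> a \<in> Av (p-1) \<Longrightarrow> b \<in> Av (n-p) \<Longrightarrow> R (Phi p a b) = R' p b"
  shows "card {s\<in>Av n. R s} = (\<Sum>p=1..n. card (Av (p-1)) * card {b\<in>Av (n-p). R' p b})"
proof -
  define S where "S = (SIGMA p:{1..n}. Av (p-1) \<times> {b\<in>Av (n-p). R' p b})"
  have img: "{s\<in>Av n. R s} = (\<lambda>(p,a,b). Phi p a b) ` S"
  proof
    show "{s\<in>Av n. R s} \<subseteq> (\<lambda>(p,a,b). Phi p a b) ` S"
    proof
      fix s assume s: "s \<in> {s\<in>Av n. R s}"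
      then obtain p a b where *: "1 \<le> p" "p \<le> n" "a \<in> Av (p-1)" "b \<in> Av (n-p)" "s = Phi p a b"
        using Phi_surj n by blast
      then have "R' p b" using s R by auto
      then show "s \<in> (\<lambda>(p,a,b). Phi p a b) ` S" using * unfolding S_def by (intro image_eqI[of _ _ "(p,a,b)"]) auto
    qed
  next
    show "(\<lambda>(p,a,b). Phi p a b) ` S \<subseteq> {s\<in>Av n. R s}"
      unfolding S_def using Phi_mem R by auto
  qed
  have inj: "inj_on (\<lambda>(p,a,b). Phi p a b) S"
  proof (rule inj_onI)
    fix x y assume h: "x \<in> S" "y \<in> S" "(\<lambda>(p,a,b). Phi p a b) x = (\<lambda>(p,a,b). Phi p a b) y"
    obtain p a b where x: "x = (p,a,b)" by (cases x) auto
    obtain p' a' b' where y: "y = (p',a',b')" by (cases y) auto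
    have "p = p' \<and> a = a' \<and> b = b'"
      using h unfolding x y S_def by (intro Phi_inj) (auto dest: Av_vals simp: Av_len)
    then show "x = y" using x y by simp
  qed
  have "card {s\<in>Av n. R s} = card S" unfolding img using inj by (rule card_image)
  also have "\<dots> = (\<Sum>p=1..n. card (Av (p-1) \<times> {b\<in>Av (n-p). R' p b}))"
    unfolding S_def by (rule card_SigmaI) (simp_all add: finite_Av)
  also have "\<dots> = (\<Sum>p=1..n. card (Av (p-1)) * card {b\<in>Av (n-p). R' p b})"
    by (simp add: card_cartesian_product)
  finally show ?thesis .
qed

lemma Av0: "Av 0 = {[]}"
  by (auto simp: Av_def isperm_def av_def)

lemma cuts_pos: "s \<in> Av n \<Longrightarrow> 1 \<le> n \<Longrightarrow> 1 \<le> cuts s"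
proof -
  assume s: "s \<in> Av n" and n: "1 \<le> n"
  have "n \<in> {j\<in>{1..length s}. lcut s j}" using Av_len[OF s] n by (auto simp: lcut_def)
  then have "{j\<in>{1..length s}. lcut s j} \<noteq> {}" by blast
  then show ?thesis unfolding cuts_def by (simp add: Suc_le_eq card_gt_0_iff)
qed

lemma A0: "card (Av 0) = 1" by (simp add: Av0)

lemma cuts_Nil: "cuts [] = 0"
proof -
  have "{j\<in>{1..length ([]::int list)}. lcut [] j} = {}" by auto
  then show ?thesis unfolding cuts_def by (simp only: card.empty)
qed

lemma AS: "1 \<le> n \<Longrightarrow> card (Av n) = (\<Sum>p=1..n. card (Av (p-1)) * card (Av (n-p)))"
  using count_Phi[of n "\<lambda>_. True" "\<lambda>_ _. True"] by simp

lemma F0: "card {s\<in>Av n. cuts s = 0} = (if n = 0 then 1 else 0)"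
proof (cases "n = 0")
  case True
  have "{s\<in>Av 0. cuts s = 0} = {[]}" by (auto simp: Av0 cuts_Nil)
  then show ?thesis using True by simp
next
  case False
  have e: "{s\<in>Av n. cuts s = 0} = {}" using cuts_pos[of _ n] False by fastforce
  show ?thesis using False unfolding e by simp
qed

lemma FS: "card {s\<in>Av n. cuts s = Suc k} = (\<Sum>p=1..n. card (Av (p-1)) * card {b\<in>Av (n-p). cuts b = k})"
proof (cases "n = 0")
  case True
  have e: "{s\<in>Av 0. cuts s = Suc k} = {}" by (auto simp: Av0 cuts_Nil)
  show ?thesis using True unfolding True e by simp
next
  case False
  then show ?thesis by (intro count_Phi) (auto simp: cuts_Phi)
qed

lemma Qcount:
  assumes n: "1 \<le> n" and k: "1 \<le> k"
  shows "card {(t,s). t \<in> {1..n} \<and> s \<in> Av n \<and> cuts s = k \<and> (\<forall>j\<in>{1..<t}. \<not> lcut s j)}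
       = (\<Sum>p=1..n. p * card (Av (p-1)) * card {b\<in>Av (n-p). cuts b = k - 1})"
proof -
  let ?F = "\<lambda>p. card {b\<in>Av (n-p). cuts b = k - 1}"
  have eq: "{(t,s). t \<in> {1..n} \<and> s \<in> Av n \<and> cuts s = k \<and> (\<forall>j\<in>{1..<t}. \<not> lcut s j)}
      = (SIGMA t:{1..n}. {s\<in>Av n. cuts s = k \<and> (\<forall>j\<in>{1..<t}. \<not> lcut s j)})" by auto
  have inner: "card {s\<in>Av n. cuts s = k \<and> (\<forall>j\<in>{1..<t}. \<not> lcut s j)}
      = (\<Sum>p=1..n. card (Av (p-1)) * (if t \<le> p then ?F p else 0))" if t: "t \<in> {1..n}" for t
  proof -
    have "card {s\<in>Av n. cuts s = k \<and> (\<forall>j\<in>{1..<t}. \<not> lcut s j)}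
      = (\<Sum>p=1..n. card (Av (p-1)) * card {b\<in>Av (n-p). Suc (cuts b) = k \<and> t \<le> p})"
    proof (rule count_Phi[OF n])
      fix p a b assume p: "1 \<le> p" "p \<le> n" and a: "a \<in> Av (p-1)" and b: "b \<in> Av (n-p)"
      have t1: "1 \<le> t" using t by simp
      show "(cuts (Phi p a b) = k \<and> (\<forall>j\<in>{1..<t}. \<not> lcut (Phi p a b) j)) = (Suc (cuts b) = k \<and> t \<le> p)"
        using cuts_Phi[OF a b p(1)] nocut_Phi[OF a b p(1) t1] by simp
    qed
    also have "\<dots> = (\<Sum>p=1..n. card (Av (p-1)) * (if t \<le> p then ?F p else 0))"
    proof (rule sum.cong[OF refl])
      fix p
      have "{b\<in>Av (n-p). Suc (cuts b) = k \<and> t \<le> p} = (if t \<le> p then {b\<in>Av (n-p). cuts b = k - 1} else {})"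
        using k by auto
      then show "card (Av (p-1)) * card {b\<in>Av (n-p). Suc (cuts b) = k \<and> t \<le> p}
          = card (Av (p-1)) * (if t \<le> p then ?F p else 0)" by simp
    qed
    finally show ?thesis .
  qed
  have "card {(t,s). t \<in> {1..n} \<and> s \<in> Av n \<and> cuts s = k \<and> (\<forall>j\<in>{1..<t}. \<not> lcut s j)}
      = (\<Sum>t=1..n. card {s\<in>Av n. cuts s = k \<and> (\<forall>j\<in>{1..<t}. \<not> lcut s j)})"
    unfolding eq by (rule card_SigmaI) (simp_all add: finite_Av)
  also have "\<dots> = (\<Sum>t=1..n. \<Sum>p=1..n. card (Av (p-1)) * (if t \<le> p then ?F p else 0))"
    using inner by (rule sum.cong[OF refl])
  also have "\<dots> = (\<Sum>p=1..n. \<Sum>t=1..n. card (Av (p-1)) * (if t \<le> p then ?F p else 0))"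
    by (rule sum.swap)
  also have "\<dots> = (\<Sum>p=1..n. p * card (Av (p-1)) * ?F p)"
  proof (rule sum.cong[OF refl])
    fix p assume p: "p \<in> {1..n}"
    have "(\<Sum>t=1..n. card (Av (p-1)) * (if t \<le> p then ?F p else 0))
        = (\<Sum>t\<in>{1..n}. if t \<le> p then card (Av (p-1)) * ?F p else 0)"
      by (rule sum.cong) auto
    also have "\<dots> = (\<Sum>t\<in>{1..n} \<inter> {t. t \<le> p}. card (Av (p-1)) * ?F p)"
      by (simp only: sum.If_cases finite_atLeastAtMost) simp
    also have "{1..n} \<inter> {t. t \<le> p} = {1..p}" using p by auto
    finally show "(\<Sum>t=1..n. card (Av (p-1)) * (if t \<le> p then ?F p else 0)) = p * card (Av (p-1)) * ?F p"
      by simp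
  qed
  finally show ?thesis .
qed





lemma sum_shift1: "(\<Sum>i=0..n-1. (f::nat\<Rightarrow>'a::comm_monoid_add) (Suc i)) = (\<Sum>p=1..n. f p)" if "n \<ge> 1"
proof -
  have "(\<Sum>p=1..n. f p) = (\<Sum>i=0..n-1. f (Suc i))"
    using that by (simp add: sum.shift_bounds_cl_Suc_ivl[symmetric]) 
  then show ?thesis by simp
qed

lemma conv_X:
  fixes a b :: "nat \<Rightarrow> nat"
  assumes "n \<ge> 1"
  shows "(fps_X * Abs_fps (\<lambda>n. int (a n)) * Abs_fps (\<lambda>n. int (b n))) $ n
       = int (\<Sum>p=1..n. a (p-1) * b (n-p))"
proof -
  have "(fps_X * Abs_fps (\<lambda>n. int (a n)) * Abs_fps (\<lambda>n. int (b n))) $ n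
      = (Abs_fps (\<lambda>n. int (a n)) * Abs_fps (\<lambda>n. int (b n))) $ (n-1)"
    using assms by (simp add: mult.assoc)
  also have "\<dots> = (\<Sum>i=0..n-1. int (a i) * int (b (n - 1 - i)))" by (simp add: fps_mult_nth)
  also have "\<dots> = (\<Sum>i=0..n-1. int (a (Suc i - 1) * b (n - Suc i)))" by simp
  also have "\<dots> = (\<Sum>p=1..n. int (a (p-1) * b (n-p)))"
    using sum_shift1[OF assms, of "\<lambda>p. int (a (p-1) * b (n-p))"] by simp
  finally show ?thesis by simp
qed

lemma fps_count:
  fixes A :: "nat \<Rightarrow> nat" and F :: "nat \<Rightarrow> nat \<Rightarrow> nat"
  assumes A0: "A 0 = 1" and AS: "\<And>n. n \<ge> 1 \<Longrightarrow> A n = (\<Sum>p=1..n. A(p-1) * A(n-p))"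
    and F0: "\<And>n. F n 0 = (if n = 0 then 1 else 0)"
    and FS: "\<And>n k. F n (Suc k) = (\<Sum>p=1..n. A(p-1) * F (n-p) k)"
    and k: "1 \<le> k" "k \<le> d"
  shows "(\<Sum>p=1..d. p * A(p-1) * F (d-p) (k-1)) = (2*d-k-1) choose (d-1)"
proof -
  define C where "C = Abs_fps (\<lambda>n. int (A n))"
  define G where "G = (\<lambda>k. Abs_fps (\<lambda>n. int (F n k)))"
  define Y where "Y = fps_X * C"
  define D where "D = fps_deriv Y"
  have Ceq: "C = 1 + fps_X * C^2"
  proof (rule fps_ext)
    fix n show "C $ n = (1 + fps_X * C^2) $ n"
    proof (cases "n = 0")
      case True then show ?thesis by (simp add: C_def A0)
    next
      case False
      then have "(1 + fps_X * C^2) $ n = (fps_X * C * C) $ n" by (simp add: power2_eq_square mult.assoc)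
      also have "\<dots> = int (\<Sum>p=1..n. A (p-1) * A (n-p))" unfolding C_def
        using False by (intro conv_X) simp
      finally show ?thesis using AS[of n] False by (simp add: C_def)
    qed
  qed
  have Gk: "G k = Y^k" for k
  proof (induction k)
    case 0 show ?case by (rule fps_ext) (simp add: G_def F0)
  next
    case (Suc k)
    have "G (Suc k) = fps_X * C * G k"
    proof (rule fps_ext)
      fix n show "G (Suc k) $ n = (fps_X * C * G k) $ n"
      proof (cases "n = 0")
        case True then show ?thesis by (simp add: G_def FS)
      next
        case False
        then show ?thesis unfolding C_def G_def using conv_X[of n A "\<lambda>n. F n k"] FS by simp
      qed
    qed
    then show ?case using Suc by (simp add: Y_def)
  qed
  have Yeq: "Y = fps_X + Y^2"
    unfolding Y_def by (subst Ceq) (simp add: algebra_simps power2_eq_square)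
  have Deq: "D = 1 + 2 * fps_X * C * D"
  proof -
    have "D = fps_deriv (fps_X + Y^2)" unfolding D_def by (subst Yeq) simp
    also have "\<dots> = 1 + 2 * Y * D" by (simp add: D_def power2_eq_square algebra_simps)
    finally show ?thesis by (simp add: Y_def mult.assoc)
  qed
  have Cpow: "C^(Suc k) = C^k + fps_X * C^(k+2)" for k
  proof -
    have "C^(Suc k) = C^k * C" by simp
    also have "\<dots> = C^k * (1 + fps_X * C^2)" by (subst Ceq) simp
    also have "\<dots> = C^k + fps_X * C^(k+2)" by (simp add: algebra_simps power_add power2_eq_square)
    finally show ?thesis .
  qed
  have D0: "D $ 0 = 1" by (simp add: D_def Y_def C_def A0)
  have C0: "C $ 0 = 1" by (simp add: C_def A0)
  have T: "(D * C^k) $ j = int ((2*j + k) choose j)" for k j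
  proof (induction j arbitrary: k)
    case 0
    show ?case
    proof (induction k)
      case 0 then show ?case by (simp add: D0)
    next
      case (Suc k)
      have "(D * C^Suc k) $ 0 = (D * C^k) $ 0 + (fps_X * (D * C^(k+2))) $ 0"
        by (simp only: Cpow distrib_left fps_add_nth) (simp add: algebra_simps)
      then show ?case using Suc by (simp add: C0)
    qed
  next
    case (Suc j)
    note outer = Suc.IH
    show ?case
    proof (induction k)
      case 0
      have "(D * C^0) $ Suc j = (2 * (fps_X * (C * D))) $ Suc j"
        by (subst Deq) (simp add: algebra_simps)
      also have "\<dots> = (fps_X * (C*D) + fps_X*(C*D)) $ Suc j" by (simp only: mult_2)
      also have "\<dots> = 2 * (D * C^1) $ j" by (simp only: fps_add_nth fps_X_mult_nth, simp add: mult.commute[of C D])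
      also have "\<dots> = 2 * int ((2*j+1) choose j)" using outer[of 1] by simp
      also have "\<dots> = int ((2 * Suc j) choose Suc j)"
      proof -
        have "(2 * Suc j) choose Suc j = (Suc (2*j) choose j) + (Suc (2*j) choose Suc j)"
          by simp
        moreover have "Suc (2*j) choose Suc j = Suc (2*j) choose j"
          using binomial_symmetric[of j "Suc (2*j)"] by (simp add: Suc_diff_le)
        ultimately show ?thesis by simp
      qed
      finally show ?case by simp
    next
      case (Suc k)
      have "(D * C^Suc k) $ Suc j = (D * C^k) $ Suc j + (fps_X * (D * C^(k+2))) $ Suc j"
        by (simp only: Cpow distrib_left fps_add_nth) (simp add: algebra_simps)
      also have "\<dots> = int ((2 * Suc j + k) choose Suc j) + int ((2*j + (k+2)) choose j)"
      proof -
        have "(fps_X * (D * C^(k+2))) $ Suc j = (D * C^(k+2)) $ j" by (simp only: fps_X_mult_nth) simp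
        then show ?thesis using Suc.IH outer[of "k+2"] by (simp add: algebra_simps)
      qed
      also have "\<dots> = int ((2 * Suc j + Suc k) choose Suc j)" by simp
      finally show ?case .
    qed
  qed
  define j where "j = d - k"
  have "int (\<Sum>p=1..d. p * A(p-1) * F (d-p) (k-1)) = int (\<Sum>p=1..d. (p-1+1) * A(p-1) * F (d-p) (k-1))"
    by (intro arg_cong[where f=int] sum.cong) auto
  also have "\<dots> = (fps_X * Abs_fps (\<lambda>n. int ((n+1) * A n)) * G (k-1)) $ d"
    unfolding G_def using k by (subst conv_X[of d "\<lambda>n. (n+1) * A n"]) (auto simp: mult.assoc)
  also have "Abs_fps (\<lambda>n. int ((n+1) * A n)) = D"
    by (rule fps_ext) (simp add: D_def Y_def C_def)
  also have "(fps_X * D * G (k-1)) $ d = (D * G (k-1)) $ (d-1)" using k by (simp add: mult.assoc)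
  also have "D * G (k-1) = fps_X^(k-1) * (D * C^(k-1))" unfolding Gk Y_def
    by (simp add: power_mult_distrib algebra_simps)
  also have "(fps_X^(k-1) * (D * C^(k-1))) $ (d-1) = (D * C^(k-1)) $ j"
    using k by (simp add: fps_X_power_mult_nth j_def)
  also have "\<dots> = int ((2*j + (k-1)) choose j)" by (rule T)
  also have "(2*j + (k-1)) choose j = (2*d-k-1) choose (d-1)"
  proof -
    have e1: "2*j + (k-1) = 2*d-k-1" "2*j+(k-1) - j = d-1" "j \<le> 2*j+(k-1)" using k by (simp_all add: j_def)
    have "(2*j+(k-1)) choose j = (2*j+(k-1)) choose (2*j+(k-1)-j)" by (rule binomial_symmetric[OF e1(3)])
    also have "\<dots> = (2*d-k-1) choose (d-1)" by (simp only: e1(2)) (simp only: e1(1))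
    finally show ?thesis .
  qed
  finally show ?thesis by (simp only: of_nat_eq_iff)
qed




lemma per_mult_gen:
  fixes g :: "int \<Rightarrow> int" and D c :: int
  assumes per: "\<And>i. g (i + D) = g i + c"
  shows "g (i + m * D) = g i + m * c"
proof -
  have nat: "g (i + int n * D) = g i + int n * c" for n :: nat and i
  proof (induction n)
    case 0 then show ?case by simp
  next
    case (Suc n)
    have "g (i + int (Suc n) * D) = g ((i + int n * D) + D)" by (simp add: algebra_simps)
    also have "\<dots> = g (i + int n * D) + c" by (rule per)
    finally show ?case using Suc by (simp add: algebra_simps)
  qed
  show ?thesis
  proof (cases "m \<ge> 0")
    case True
    define n where "n = nat m"
    have "m = int n" using True by (simp add: n_def)
    then show ?thesis using nat by simp
  next
    case False
    define n where "n = nat (- m)"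
    have m: "m = - int n" using False by (simp add: n_def)
    have "g i = g ((i + m * D) + int n * D)" using m by (simp add: algebra_simps)
    also have "\<dots> = g (i + m * D) + int n * c" by (rule nat)
    finally show ?thesis using m by (simp add: algebra_simps)
  qed
qed

lemma mod_bij:
  fixes D a :: int
  assumes D: "0 < D"
  shows "bij_betw (\<lambda>x. x mod D) {a..<a+D} {0..<D}"
proof -
  have inj: "inj_on (\<lambda>x. x mod D) {a..<a+D}"
  proof (rule inj_onI)
    fix x y assume x: "x \<in> {a..<a+D}" and y: "y \<in> {a..<a+D}" and e: "x mod D = y mod D"
    have "D dvd (x - y)" using e by (simp add: mod_eq_dvd_iff)
    moreover have "\<bar>x - y\<bar> < D" using x y by auto
    have "x - y = 0"
    proof (rule ccontr)
      assume "x - y \<noteq> 0"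
      then have "\<bar>D\<bar> \<le> \<bar>x - y\<bar>" using dvd_imp_le_int \<open>D dvd (x - y)\<close> by blast
      then show False using \<open>\<bar>x - y\<bar> < D\<close> D by simp
    qed
    then show "x = y" by simp
  qed
  moreover have "(\<lambda>x. x mod D) ` {a..<a+D} = {0..<D}"
  proof (rule card_subset_eq)
    show "(\<lambda>x. x mod D) ` {a..<a+D} \<subseteq> {0..<D}" using D by auto
    show "card ((\<lambda>x. x mod D) ` {a..<a+D}) = card {0..<D}" using card_image[OF inj] by simp
  qed simp
  ultimately show ?thesis by (simp add: bij_betw_def)
qed

lemma window_sum:
  fixes h :: "int \<Rightarrow> int" and D a :: int
  assumes D: "0 < D" and per: "\<And>i. h (i + D) = h i"
  shows "sum h {a..<a+D} = sum h {0..<D}"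
proof -
  have hm: "h x = h (x mod D)" for x
  proof -
    have "h (x mod D + (x div D) * D) = h (x mod D) + (x div D) * 0"
      by (rule per_mult_gen) (simp add: per)
    then show ?thesis by (simp add: mod_div_mult_eq)
  qed
  have "sum h {a..<a+D} = sum (\<lambda>x. h (x mod D)) {a..<a+D}" using hm by simp
  also have "\<dots> = sum h {0..<D}" by (rule sum.reindex_bij_betw[OF mod_bij[OF D]])
  finally show ?thesis .
qed

context
  fixes d :: nat and \<pi> :: "int \<Rightarrow> int"
  assumes aff: "affine_perm d \<pi>" and dpos: "0 < d"
begin

lemma per: "\<pi> (i + int d) = \<pi> i + int d"
  using aff by (simp add: affine_perm_def)

lemma perm: "\<pi> (i + m * int d) = \<pi> i + m * int d"
  by (rule per_mult_gen) (rule per)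

lemma pinj: "\<pi> x = \<pi> y \<longleftrightarrow> x = y"
  using aff by (auto simp: affine_perm_def bij_def inj_def)

lemma wsum: "(\<Sum>i\<in>{a..<a + int d}. \<pi> i - i) = 0"
proof -
  have "(\<Sum>i\<in>{a..<a + int d}. \<pi> i - i) = (\<Sum>i\<in>{0..<int d}. \<pi> i - i)"
    by (rule window_sum) (use dpos in \<open>simp_all add: per\<close>)
  also have "\<dots> = 0" using aff by (simp add: affine_perm_def)
  finally show ?thesis .
qed

lemma cut_le:
  assumes cut: "cut_point \<pi> c"
  shows "\<pi> x \<le> c \<longleftrightarrow> x \<le> c"
proof -
  define D where "D = int d"
  have D: "0 < D" using dpos by (simp add: D_def)
  define W0 where "W0 = {c - D + 1..c}"
  define M where "M = Max (\<pi> ` W0)"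
  have W0: "finite W0" "W0 \<noteq> {}" using D by (auto simp: W0_def)
  have "M \<in> \<pi> ` W0" unfolding M_def using W0 by (intro Max_in) auto
  then obtain i0 where i0: "i0 \<in> W0" "\<pi> i0 = M" by blast
  have le: "\<pi> x \<le> M" if x: "x \<le> c" for x
  proof -
    define q where "q = (x - (c - D + 1)) div D"
    define r where "r = (x - (c - D + 1)) mod D"
    have r: "0 \<le> r" "r < D" using D by (simp_all add: r_def)
    have xe: "x = (c - D + 1 + r) + q * D" unfolding q_def r_def by (simp add: mod_div_mult_eq)
    have "q * D < 1 * D" using xe x r by linarith
    then have "q < 1" by (simp only: mult_less_cancel_right_pos[OF D])
    then have q: "q \<le> 0" by simp
    have "\<pi> x = \<pi> ((c - D + 1 + r) + q * int d)" using xe by (simp add: D_def)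
    also have "\<dots> = \<pi> (c - D + 1 + r) + q * D" unfolding D_def by (rule perm)
    finally have "\<pi> x = \<pi> (c - D + 1 + r) + q * D" .
    moreover have "\<pi> (c - D + 1 + r) \<le> M" unfolding M_def using W0 r by (auto simp: W0_def)
    moreover have "q * D \<le> 0" using q D by (simp add: mult_nonpos_nonneg)
    ultimately show ?thesis by linarith
  qed
  have gt: "M < \<pi> y" if "c < y" for y
    using cut i0 that unfolding cut_point_def W0_def by auto
  have iff: "\<pi> x \<le> M \<longleftrightarrow> x \<le> c" for x
  proof
    assume "\<pi> x \<le> M"
    then show "x \<le> c" using gt[of x] by linarith
  qed (rule le)
  define W where "W = {c+1..<c+1+D}"
  have img: "\<pi> ` W = {M+1..<M+1+D}"
  proof (rule card_subset_eq)
    show "finite {M+1..<M+1+D}" by simp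
    show "\<pi> ` W \<subseteq> {M+1..<M+1+D}"
    proof
      fix v assume "v \<in> \<pi> ` W"
      then obtain y where y: "y \<in> W" "v = \<pi> y" by auto
      have "\<pi> (y - D) \<le> M" using iff[of "y - D"] y by (auto simp: W_def)
      moreover have "\<pi> y = \<pi> (y - D) + D" using per[of "y - D"] by (simp add: D_def)
      moreover have "M < \<pi> y" using iff[of y] y by (auto simp: W_def)
      ultimately show "v \<in> {M+1..<M+1+D}" using y by auto
    qed
    show "card (\<pi> ` W) = card {M+1..<M+1+D}"
      using card_image[of \<pi> W] pinj by (simp add: inj_on_def W_def)
  qed
  have "(\<Sum>y\<in>W. \<pi> y) = (\<Sum>v\<in>\<pi> ` W. v)" using pinj by (simp add: sum.reindex inj_on_def)
  also have "\<dots> = (\<Sum>v\<in>{M+1..<M+1+D}. v)" using img by simp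
  also have "{M+1..<M+1+D} = (\<lambda>y. y + (M - c)) ` W"
  proof -
    have "(\<lambda>y. y + (M - c)) ` W = {c+1+(M-c)..<c+1+D+(M-c)}" unfolding W_def by (rule image_add_atLeastLessThan')
    also have "\<dots> = {M+1..<M+1+D}" by (rule arg_cong2[where f=atLeastLessThan]) simp_all
    finally show ?thesis by simp
  qed
  also have "(\<Sum>v\<in>(\<lambda>y. y + (M - c)) ` W. v) = (\<Sum>y\<in>W. y + (M - c))"
    by (simp add: sum.reindex inj_on_def)
  also have "\<dots> = (\<Sum>y\<in>W. y) + D * (M - c)" using D by (simp add: sum.distrib W_def)
  finally have s1: "(\<Sum>y\<in>W. \<pi> y) = (\<Sum>y\<in>W. y) + D * (M - c)" .
  have "(\<Sum>y\<in>W. \<pi> y - y) = 0" unfolding W_def D_def by (rule wsum)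
  then have "(\<Sum>y\<in>W. \<pi> y) = (\<Sum>y\<in>W. y)" by (simp add: sum_subtractf)
  with s1 have "D * (M - c) = 0" by simp
  then have "M = c" using D by simp
  then show ?thesis using iff by simp
qed

lemma cut_le_m:
  assumes cut: "cut_point \<pi> c"
  shows "\<pi> x \<le> c + m * int d \<longleftrightarrow> x \<le> c + m * int d"
proof -
  have "\<pi> x = \<pi> (x - m * int d) + m * int d" using perm[of "x - m * int d" m] by simp
  then show ?thesis using cut_le[OF cut, of "x - m * int d"] by linarith
qed

lemma cut_shift: "cut_point \<pi> (x + m * int d) \<longleftrightarrow> cut_point \<pi> x"
proof -
  have "cut_point \<pi> (x + m * int d) \<longleftrightarrow> (\<forall>i k. i \<le> x \<and> x < k \<longrightarrow> \<pi> (i + m * int d) < \<pi> (k + m * int d))"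
    unfolding cut_point_def
  proof safe
    fix i k assume h: "\<forall>i k. i \<le> x + m * int d \<and> x + m * int d < k \<longrightarrow> \<pi> i < \<pi> k" "i \<le> x" "x < k"
    then show "\<pi> (i + m * int d) < \<pi> (k + m * int d)" by simp
  next
    fix i k assume h: "\<forall>i k. i \<le> x \<and> x < k \<longrightarrow> \<pi> (i + m * int d) < \<pi> (k + m * int d)"
      "i \<le> x + m * int d" "x + m * int d < k"
    have "i - m * int d \<le> x" "x < k - m * int d" using h(2,3) by simp_all
    then have "\<pi> ((i - m * int d) + m * int d) < \<pi> ((k - m * int d) + m * int d)" using h(1) by blast
    then show "\<pi> i < \<pi> k" by simp
  qed
  also have "\<dots> \<longleftrightarrow> cut_point \<pi> x" unfolding cut_point_def by (simp add: perm)
  finally show ?thesis .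
qed

end

definition wl :: "nat \<Rightarrow> (int \<Rightarrow> int) \<Rightarrow> int \<Rightarrow> int list" where
  "wl d \<pi> c = map (\<lambda>i. \<pi> (c + 1 + int i) - (c + 1)) [0..<d]"

lemma wl_len: "length (wl d \<pi> c) = d" by (simp add: wl_def)
lemma wl_nth: "i < d \<Longrightarrow> wl d \<pi> c ! i = \<pi> (c + 1 + int i) - (c + 1)" by (simp add: wl_def)

context
  fixes d :: nat and \<pi> :: "int \<Rightarrow> int" and c :: int
  assumes aff: "affine_perm d \<pi>" and dpos: "0 < d" and cut: "cut_point \<pi> c"
begin

lemma win_vals: "c < y \<Longrightarrow> y \<le> c + int d \<Longrightarrow> c < \<pi> y \<and> \<pi> y \<le> c + int d"
  using cut_le[OF aff dpos cut, of y] cut_le_m[OF aff dpos cut, of y 1] by auto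

lemma wl_perm: "isperm d (wl d \<pi> c)"
proof -
  have vals: "set (wl d \<pi> c) \<subseteq> {0..<int d}"
  proof
    fix v assume "v \<in> set (wl d \<pi> c)"
    then obtain i where i: "i < d" "v = \<pi> (c + 1 + int i) - (c + 1)" by (auto simp: wl_def)
    then show "v \<in> {0..<int d}" using win_vals[of "c + 1 + int i"] by auto
  qed
  have dist: "distinct (wl d \<pi> c)"
    unfolding distinct_conv_nth wl_len using pinj[OF aff dpos] by (simp add: wl_nth)
  have "card (set (wl d \<pi> c)) = card {0..<int d}" using distinct_card[OF dist] by (simp add: wl_len)
  then have "set (wl d \<pi> c) = {0..<int d}" using vals by (intro card_subset_eq) auto
  then show ?thesis using dist by (simp add: isperm_def)
qed

lemma wl_lcut:
  assumes j: "j \<le> d"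
  shows "lcut (wl d \<pi> c) j \<longleftrightarrow> cut_point \<pi> (c + int j)"
proof
  assume h: "cut_point \<pi> (c + int j)"
  show "lcut (wl d \<pi> c) j" unfolding lcut_def wl_len
  proof (intro allI impI)
    fix i l assume "i < j \<and> j \<le> l \<and> l < d"
    then show "wl d \<pi> c ! i < wl d \<pi> c ! l" using h unfolding cut_point_def by (simp add: wl_nth)
  qed
next
  assume h: "lcut (wl d \<pi> c) j"
  show "cut_point \<pi> (c + int j)" unfolding cut_point_def
  proof (intro allI impI)
    fix x y assume xy: "x \<le> c + int j \<and> c + int j < y"
    show "\<pi> x < \<pi> y"
    proof (cases "y \<le> c + int d")
      case False
      then have "c + int d < \<pi> y" using cut_le_m[OF aff dpos cut, of y 1] by auto
      moreover have "\<pi> x \<le> c + int d" using cut_le_m[OF aff dpos cut, of x 1] xy j by auto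
      ultimately show ?thesis by simp
    next
      case True
      show ?thesis
      proof (cases "x \<le> c")
        case True
        then show ?thesis using cut xy unfolding cut_point_def by auto
      next
        case False
        define i where "i = nat (x - c - 1)"
        define l where "l = nat (y - c - 1)"
        have "i < j" "j \<le> l" "l < d" using False True xy by (auto simp: i_def l_def)
        then have "wl d \<pi> c ! i < wl d \<pi> c ! l" using h unfolding lcut_def wl_len by blast
        moreover have "c + 1 + int i = x" "c + 1 + int l = y" using False xy by (auto simp: i_def l_def)
        ultimately show ?thesis using \<open>l < d\<close> \<open>i < j\<close> \<open>j \<le> l\<close> by (simp add: wl_nth)
      qed
    qed
  qed
qed

lemma wl_av: "avoids312 \<pi> \<longleftrightarrow> av (wl d \<pi> c)"
proof
  assume h: "avoids312 \<pi>"
  show "av (wl d \<pi> c)" unfolding av_def wl_len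
  proof
    assume "\<exists>i j l. i < j \<and> j < l \<and> l < d \<and> wl d \<pi> c ! j < wl d \<pi> c ! l \<and> wl d \<pi> c ! l < wl d \<pi> c ! i"
    then obtain i j l where *: "i < j" "j < l" "l < d" "wl d \<pi> c ! j < wl d \<pi> c ! l" "wl d \<pi> c ! l < wl d \<pi> c ! i"
      by blast
    then have "\<pi> (c+1+int j) < \<pi> (c+1+int l)" "\<pi> (c+1+int l) < \<pi> (c+1+int i)" by (simp_all add: wl_nth)
    moreover have "c+1+int i < c+1+int j" "c+1+int j < c+1+int l" using * by simp_all
    ultimately show False using h unfolding avoids312_def by blast
  qed
next
  assume h: "av (wl d \<pi> c)"
  show "avoids312 \<pi>" unfolding avoids312_def
  proof
    assume "\<exists>x y z. x < y \<and> y < z \<and> \<pi> y < \<pi> z \<and> \<pi> z < \<pi> x"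
    then obtain x y z where p: "x < y" "y < z" "\<pi> y < \<pi> z" "\<pi> z < \<pi> x" by blast
    define D where "D = int d"
    have D: "0 < D" using dpos by (simp add: D_def)
    define m where "m = (z - c - 1) div D"
    define r where "r = (z - c - 1) mod D"
    have r: "0 \<le> r" "r < D" using D by (simp_all add: r_def)
    have ze: "z = c + 1 + r + m * D" unfolding m_def r_def by (simp add: mod_div_mult_eq)
    have zgt: "\<not> z \<le> c + m * int d" using ze r by (simp add: D_def)
    have xgt: "\<not> x \<le> c + m * int d"
    proof
      assume "x \<le> c + m * int d"
      then have "\<pi> x \<le> c + m * int d" using cut_le_m[OF aff dpos cut] by blast
      moreover have "\<not> \<pi> z \<le> c + m * int d" using cut_le_m[OF aff dpos cut] zgt by blast
      ultimately show False using p by simp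
    qed
    define i where "i = nat (x - m * D - c - 1)"
    define j where "j = nat (y - m * D - c - 1)"
    define l where "l = nat (z - m * D - c - 1)"
    have ie: "c + 1 + int i + m * D = x" using xgt by (simp add: i_def D_def)
    have je: "c + 1 + int j + m * D = y" using xgt p by (simp add: j_def D_def)
    have le: "c + 1 + int l + m * D = z" using ze r by (simp add: l_def)
    have ord: "i < j" "j < l" "l < d" using ie je le p ze r by (auto simp: D_def)
    have pe: "\<pi> (c + 1 + int a + m * D) = \<pi> (c + 1 + int a) + m * D" for a
      unfolding D_def by (rule perm[OF aff dpos])
    have "wl d \<pi> c ! j < wl d \<pi> c ! l" "wl d \<pi> c ! l < wl d \<pi> c ! i"
      using p ord pe[of i] pe[of j] pe[of l] ie je le by (simp_all add: wl_nth)
    then show False using h ord unfolding av_def wl_len by blast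
  qed
qed

lemma wl_cuts: "num_cut_points d \<pi> = cuts (wl d \<pi> c)"
proof -
  define D where "D = int d"
  have D: "0 < D" using dpos by (simp add: D_def)
  define h where "h = (\<lambda>j::nat. (c + int j) mod D)"
  have cs: "cut_point \<pi> (c + int j) \<longleftrightarrow> cut_point \<pi> (h j)" for j
  proof -
    have "c + int j = h j + ((c + int j) div D) * int d" by (simp add: h_def D_def mod_div_mult_eq)
    then show ?thesis using cut_shift[OF aff dpos, of "h j" "(c + int j) div D"] by simp
  qed
  have mb: "bij_betw (\<lambda>x. x mod D) {c+1..<c+1+D} {0..<D}" by (rule mod_bij[OF D])
  have inj: "inj_on h {j\<in>{1..d}. cut_point \<pi> (c + int j)}"
  proof (rule inj_onI)
    fix j j' assume j: "j \<in> {j\<in>{1..d}. cut_point \<pi> (c + int j)}" "j' \<in> {j\<in>{1..d}. cut_point \<pi> (c + int j)}"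
      and e: "h j = h j'"
    have "c + int j \<in> {c+1..<c+1+D}" "c + int j' \<in> {c+1..<c+1+D}" using j by (auto simp: D_def)
    then have "c + int j = c + int j'" using e mb unfolding bij_betw_def inj_on_def h_def by blast
    then show "j = j'" by simp
  qed
  have img: "h ` {j\<in>{1..d}. cut_point \<pi> (c + int j)} = {r\<in>{0..<int d}. cut_point \<pi> r}"
  proof
    show "h ` {j\<in>{1..d}. cut_point \<pi> (c + int j)} \<subseteq> {r\<in>{0..<int d}. cut_point \<pi> r}"
      using D cs by (auto simp: h_def D_def)
  next
    show "{r\<in>{0..<int d}. cut_point \<pi> r} \<subseteq> h ` {j\<in>{1..d}. cut_point \<pi> (c + int j)}"
    proof
      fix r assume r: "r \<in> {r\<in>{0..<int d}. cut_point \<pi> r}"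
      have "r \<in> (\<lambda>x. x mod D) ` {c+1..<c+1+D}" using mb r unfolding bij_betw_def D_def by simp
      then obtain y where y: "y \<in> {c+1..<c+1+D}" "y mod D = r" by blast
      define j where "j = nat (y - c)"
      have j: "j \<in> {1..d}" "c + int j = y" using y by (auto simp: j_def D_def)
      then have "h j = r" using y by (simp add: h_def)
      moreover have "cut_point \<pi> (c + int j)" using cs[of j] \<open>h j = r\<close> r by simp
      ultimately show "r \<in> h ` {j\<in>{1..d}. cut_point \<pi> (c + int j)}" using j by blast
    qed
  qed
  have "num_cut_points d \<pi> = card {j\<in>{1..d}. cut_point \<pi> (c + int j)}"
    unfolding num_cut_points_def using card_image[OF inj] img by simp
  also have "\<dots> = cuts (wl d \<pi> c)" unfolding cuts_def wl_len
    using wl_lcut by (intro arg_cong[where f=card]) auto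
  finally show ?thesis .
qed

lemma wl_max:
  assumes c: "0 \<le> c" "c < int d"
  shows "(\<forall>r. 0 \<le> r \<and> r < int d \<and> cut_point \<pi> r \<longrightarrow> r \<le> c) \<longleftrightarrow> (\<forall>j\<in>{1..<nat (int d - c)}. \<not> lcut (wl d \<pi> c) j)"
proof
  assume h: "\<forall>r. 0 \<le> r \<and> r < int d \<and> cut_point \<pi> r \<longrightarrow> r \<le> c"
  show "\<forall>j\<in>{1..<nat (int d - c)}. \<not> lcut (wl d \<pi> c) j"
  proof (intro ballI notI)
    fix j assume j: "j \<in> {1..<nat (int d - c)}" and l: "lcut (wl d \<pi> c) j"
    have "j \<le> d" using j c by auto
    then have "cut_point \<pi> (c + int j)" using l wl_lcut[of j] by simp
    moreover have "int j < int d - c" using j by (simp add: zless_nat_eq_int_zless)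
    moreover have "1 \<le> j" using j by simp
    ultimately show False using h[rule_format, of "c + int j"] c by simp
  qed
next
  assume h: "\<forall>j\<in>{1..<nat (int d - c)}. \<not> lcut (wl d \<pi> c) j"
  show "\<forall>r. 0 \<le> r \<and> r < int d \<and> cut_point \<pi> r \<longrightarrow> r \<le> c"
  proof (intro allI impI)
    fix r assume r: "0 \<le> r \<and> r < int d \<and> cut_point \<pi> r"
    show "r \<le> c"
    proof (rule ccontr)
      assume "\<not> r \<le> c"
      define j where "j = nat (r - c)"
      have j: "j \<in> {1..<nat (int d - c)}" "c + int j = r" "j \<le> d" using \<open>\<not> r \<le> c\<close> r c by (auto simp: j_def)
      then have "lcut (wl d \<pi> c) j" using wl_lcut[of j] r by simp
      then show False using h j by blast
    qed
  qed
qed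

end

definition gm :: "nat \<Rightarrow> int \<Rightarrow> int list \<Rightarrow> int \<Rightarrow> int" where
  "gm d c s x = s ! nat ((x - c - 1) mod int d) + c + 1 + int d * ((x - c - 1) div int d)"

context
  fixes d :: nat and c :: int and s :: "int list"
  assumes dpos: "0 < d" and sp: "isperm d s"
begin

lemma s_len: "length s = d" using isperm_length[OF sp] .

lemma s_val: "j < d \<Longrightarrow> 0 \<le> s!j \<and> s!j < int d"
  using sp s_len nth_mem[of j s] by (auto simp: isperm_def)

lemma gm_dec: "x = c + 1 + int (nat ((x - c - 1) mod int d)) + ((x - c - 1) div int d) * int d"
  "nat ((x - c - 1) mod int d) < d"
  using dpos by (simp_all add: mod_div_mult_eq) (simp add: nat_less_iff)

lemma gm_at: "j < d \<Longrightarrow> gm d c s (c + 1 + int j + q * int d) = s!j + c + 1 + q * int d"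
  by (simp add: gm_def algebra_simps)

lemma gm_at0: "j < d \<Longrightarrow> gm d c s (c + 1 + int j) = s!j + c + 1"
  using gm_at[of j 0] by simp

lemma gm_per: "gm d c s (x + int d) = gm d c s x + int d"
proof -
  have eq: "x + int d - c - 1 = (x - c - 1) + int d" by simp
  have e1: "(x + int d - c - 1) mod int d = (x - c - 1) mod int d" unfolding eq by simp
  have e2: "(x + int d - c - 1) div int d = (x - c - 1) div int d + 1" unfolding eq using dpos by simp
  show ?thesis unfolding gm_def e1 e2 by (simp add: algebra_simps)
qed

lemma gm_cases: obtains j q where "j < d" "x = c + 1 + int j + q * int d"
  using gm_dec by blast

lemma gm_inj: "gm d c s x = gm d c s y \<Longrightarrow> x = y"
proof -
  assume e: "gm d c s x = gm d c s y"
  obtain j q where j: "j < d" "x = c + 1 + int j + q * int d" by (rule gm_cases)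
  obtain j' q' where j': "j' < d" "y = c + 1 + int j' + q' * int d" by (rule gm_cases)
  have e2: "s!j + q * int d = s!j' + q' * int d" using e j j' gm_at by simp
  have "(s!j + q * int d) div int d = q" "(s!j' + q' * int d) div int d = q'"
    using s_val[OF j(1)] s_val[OF j'(1)] dpos by simp_all
  then have "q = q'" using e2 by simp
  then have "s!j = s!j'" using e2 by simp
  then have "j = j'" using sp j j' s_len by (simp add: isperm_def nth_eq_iff_index_eq)
  then show "x = y" using j j' \<open>q = q'\<close> by simp
qed

lemma gm_surj: "\<exists>x. gm d c s x = v"
proof -
  define q where "q = (v - c - 1) div int d"
  define r where "r = (v - c - 1) mod int d"
  have r: "0 \<le> r" "r < int d" using dpos by (simp_all add: r_def)
  then have "r \<in> set s" using sp by (simp add: isperm_def)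
  then obtain j where j: "j < d" "s!j = r" using s_len by (auto simp: in_set_conv_nth)
  have e: "r + q * int d = v - c - 1" unfolding q_def r_def by (simp add: mod_div_mult_eq)
  have "gm d c s (c + 1 + int j + q * int d) = v" using gm_at[OF j(1)] j e by simp
  then show ?thesis by blast
qed

lemma gm_aff: "affine_perm d (gm d c s)"
proof -
  have "inj (gm d c s)" by (rule injI) (rule gm_inj)
  moreover have "surj (gm d c s)"
  proof -
    { fix v obtain x where "gm d c s x = v" using gm_surj by blast
      then have "v \<in> range (gm d c s)" by blast }
    then show ?thesis by blast
  qed
  ultimately have bij: "bij (gm d c s)" by (simp add: bij_def)
  define D where "D = int d"
  have D: "0 < D" using dpos by (simp add: D_def)
  have "(\<Sum>i\<in>{0..<D}. gm d c s i - i) = (\<Sum>i\<in>{(c+1)..<(c+1)+D}. gm d c s i - i)"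
    by (rule window_sum[symmetric]) (use D in \<open>simp_all add: gm_per D_def\<close>)
  also have "\<dots> = (\<Sum>y\<in>{0..<D}. gm d c s (y + (c+1)) - (y + (c+1)))"
  proof -
    have im: "(\<lambda>y. y + (c+1)) ` {0..<D} = {0+(c+1)..<D+(c+1)}" by (rule image_add_atLeastLessThan')
    have "{(c+1)..<(c+1)+D} = (\<lambda>y. y + (c+1)) ` {0..<D}"
      unfolding im by (rule arg_cong2[where f=atLeastLessThan]) simp_all
    moreover have "inj_on (\<lambda>y. y + (c+1)) {0..<D}" by (simp add: inj_on_def)
    ultimately show ?thesis by (simp only: sum.reindex comp_def)
  qed
  also have "\<dots> = (\<Sum>y\<in>{0..<D}. s ! nat y - y)"
  proof (rule sum.cong[OF refl])
    fix y assume y: "y \<in> {0..<D}"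
    have ny: "nat y < d" using y by (simp add: D_def nat_less_iff)
    have "gm d c s (c + 1 + int (nat y)) = s ! nat y + c + 1" by (rule gm_at0[OF ny])
    then show "gm d c s (y + (c+1)) - (y + (c+1)) = s ! nat y - y" using y by (simp add: algebra_simps)
  qed
  also have "\<dots> = (\<Sum>y\<in>{0..<D}. s ! nat y) - (\<Sum>y\<in>{0..<D}. y)" by (simp add: sum_subtractf)
  also have "(\<Sum>y\<in>{0..<D}. s ! nat y) = (\<Sum>v\<in>(\<lambda>y. s ! nat y) ` {0..<D}. v)"
  proof -
    have "inj_on (\<lambda>y. s ! nat y) {0..<D}"
      using sp s_len by (auto simp: inj_on_def isperm_def nth_eq_iff_index_eq D_def)
    then show ?thesis by (simp add: sum.reindex)
  qed
  also have "(\<lambda>y. s ! nat y) ` {0..<D} = {0..<D}"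
  proof
    show "(\<lambda>y. s ! nat y) ` {0..<D} \<subseteq> {0..<D}" using s_val by (auto simp: D_def)
    show "{0..<D} \<subseteq> (\<lambda>y. s ! nat y) ` {0..<D}"
    proof
      fix v assume "v \<in> {0..<D}"
      then have "v \<in> set s" using sp by (simp add: isperm_def D_def)
      then obtain j where j: "j < d" "s!j = v" using s_len by (auto simp: in_set_conv_nth)
      then show "v \<in> (\<lambda>y. s ! nat y) ` {0..<D}" by (intro image_eqI[of _ _ "int j"]) (auto simp: D_def)
    qed
  qed
  finally have "(\<Sum>i\<in>{0..<int d}. gm d c s i - i) = 0" by (simp add: D_def)
  then show ?thesis using bij gm_per by (simp add: affine_perm_def)
qed

lemma gm_cut: "cut_point (gm d c s) c"
  unfolding cut_point_def
proof (intro allI impI)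
  fix x y assume xy: "x \<le> c \<and> c < y"
  obtain j q where j: "j < d" "x = c + 1 + int j + q * int d" by (rule gm_cases)
  obtain j' q' where j': "j' < d" "y = c + 1 + int j' + q' * int d" by (rule gm_cases)
  have dp: "0 < int d" using dpos by simp
  have "q * int d < 0 * int d" using j xy by simp
  then have "q < 0" by (simp only: mult_less_cancel_right_pos[OF dp])
  then have "q \<le> -1" by simp
  then have "q * int d \<le> (-1) * int d" using dp by (intro mult_right_mono) simp_all
  then have "q * int d \<le> - int d" by simp
  moreover have "0 \<le> q'"
  proof (rule ccontr)
    assume "\<not> 0 \<le> q'"
    then have "q' \<le> -1" by simp
    then have "q' * int d \<le> (-1) * int d" using dp by (intro mult_right_mono) simp_all
    then have "q' * int d \<le> - int d" by simp
    then show False using j' xy by linarith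
  qed
  then have "0 \<le> q' * int d" by simp
  moreover have "gm d c s x = s!j + c + 1 + q * int d" using gm_at[OF j(1), of q] j(2) by simp
  moreover have "gm d c s y = s!j' + c + 1 + q' * int d" using gm_at[OF j'(1), of q'] j'(2) by simp
  ultimately show "gm d c s x < gm d c s y"
    using s_val[OF j(1)] s_val[OF j'(1)] by linarith
qed

lemma gm_wl: "wl d (gm d c s) c = s"
  by (rule nth_equalityI) (simp_all add: wl_len s_len wl_nth gm_at0)

end




definition cmax :: "nat \<Rightarrow> (int \<Rightarrow> int) \<Rightarrow> int" where
  "cmax d \<pi> = Max {r\<in>{0..<int d}. cut_point \<pi> r}"

lemma fP:
  assumes aff: "affine_perm d \<pi>" and dpos: "0 < d" and nc: "1 \<le> num_cut_points d \<pi>"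
  shows "cut_point \<pi> (cmax d \<pi>) \<and> 0 \<le> cmax d \<pi> \<and> cmax d \<pi> < int d
    \<and> (\<forall>r. 0 \<le> r \<and> r < int d \<and> cut_point \<pi> r \<longrightarrow> r \<le> cmax d \<pi>)"
proof -
  let ?C = "{r\<in>{0..<int d}. cut_point \<pi> r}"
  have fin: "finite ?C" by (rule finite_subset[of _ "{0..<int d}"]) auto
  have ne: "?C \<noteq> {}"
  proof
    assume "?C = {}"
    then have "card ?C = 0" by (simp only: card.empty)
    then show False using nc unfolding num_cut_points_def by linarith
  qed
  have "cmax d \<pi> \<in> ?C" unfolding cmax_def using Max_in[OF fin ne] .
  moreover have "\<forall>r. 0 \<le> r \<and> r < int d \<and> cut_point \<pi> r \<longrightarrow> r \<le> cmax d \<pi>"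
    unfolding cmax_def using Max_ge[OF fin] by auto
  ultimately show ?thesis by auto
qed

lemma gm_wl_id:
  assumes aff: "affine_perm d \<pi>" and dpos: "0 < d" and cut: "cut_point \<pi> c"
  shows "gm d c (wl d \<pi> c) = \<pi>"
proof
  fix x
  have sp: "isperm d (wl d \<pi> c)" by (rule wl_perm[OF aff dpos cut])
  obtain j q where j: "j < d" "x = c + 1 + int j + q * int d" by (rule gm_cases[OF dpos sp])
  have "gm d c (wl d \<pi> c) x = wl d \<pi> c ! j + c + 1 + q * int d" using gm_at[OF dpos sp j(1)] j by simp
  also have "\<dots> = \<pi> (c + 1 + int j) + q * int d" using j by (simp add: wl_nth)
  also have "\<dots> = \<pi> x" using perm[OF aff dpos, of "c + 1 + int j" q] j by simp
  finally show "gm d c (wl d \<pi> c) x = \<pi> x" .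
qed

lemma bijPQ:
  assumes dpos: "0 < d" and k: "1 \<le> k"
  shows "card {\<pi>. affine_perm d \<pi> \<and> avoids312 \<pi> \<and> num_cut_points d \<pi> = k}
    = card {(t,s). t \<in> {1..d} \<and> s \<in> Av d \<and> cuts s = k \<and> (\<forall>j\<in>{1..<t}. \<not> lcut s j)}"
proof (rule bij_betw_same_card)
  let ?P = "{\<pi>. affine_perm d \<pi> \<and> avoids312 \<pi> \<and> num_cut_points d \<pi> = k}"
  let ?Q = "{(t,s). t \<in> {1..d} \<and> s \<in> Av d \<and> cuts s = k \<and> (\<forall>j\<in>{1..<t}. \<not> lcut s j)}"
  let ?f = "\<lambda>\<pi>. (nat (int d - cmax d \<pi>), wl d \<pi> (cmax d \<pi>))"
  let ?g = "\<lambda>(t,s). gm d (int d - int t) s"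
  show "bij_betw ?f ?P ?Q"
  proof (rule bij_betw_byWitness[where f'="?g"])
    show "\<forall>\<pi>\<in>?P. ?g (?f \<pi>) = \<pi>"
    proof
      fix \<pi> assume p: "\<pi> \<in> ?P"
      then have aff: "affine_perm d \<pi>" by simp
      have c: "cut_point \<pi> (cmax d \<pi>)" "0 \<le> cmax d \<pi>" "cmax d \<pi> < int d"
        using fP[OF aff dpos] p k by auto
      have "int d - int (nat (int d - cmax d \<pi>)) = cmax d \<pi>" using c by simp
      then show "?g (?f \<pi>) = \<pi>" using gm_wl_id[OF aff dpos c(1)] by simp
    qed
    show "?f ` ?P \<subseteq> ?Q"
    proof
      fix q assume "q \<in> ?f ` ?P"
      then obtain \<pi> where p: "\<pi> \<in> ?P" and q: "q = ?f \<pi>" by blast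
      then have aff: "affine_perm d \<pi>" by simp
      have c: "cut_point \<pi> (cmax d \<pi>)" "0 \<le> cmax d \<pi>" "cmax d \<pi> < int d"
        "\<forall>r. 0 \<le> r \<and> r < int d \<and> cut_point \<pi> r \<longrightarrow> r \<le> cmax d \<pi>"
        using fP[OF aff dpos] p k by auto
      have "wl d \<pi> (cmax d \<pi>) \<in> Av d"
        using wl_perm[OF aff dpos c(1)] wl_av[OF aff dpos c(1)] p by (simp add: Av_def)
      moreover have "cuts (wl d \<pi> (cmax d \<pi>)) = k" using wl_cuts[OF aff dpos c(1)] p by simp
      moreover have "\<forall>j\<in>{1..<nat (int d - cmax d \<pi>)}. \<not> lcut (wl d \<pi> (cmax d \<pi>)) j"
        using wl_max[OF aff dpos c(1) c(2) c(3)] c(4) by blast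
      moreover have "nat (int d - cmax d \<pi>) \<in> {1..d}" using c by auto
      ultimately show "q \<in> ?Q" using q by simp
    qed
    have gQ: "?g q \<in> ?P \<and> ?f (?g q) = q" if q: "q \<in> ?Q" for q
    proof -
      obtain t s where ts: "q = (t,s)" by (cases q)
      have t: "t \<in> {1..d}" and s: "s \<in> Av d" and cs: "cuts s = k" and nl: "\<forall>j\<in>{1..<t}. \<not> lcut s j"
        using q ts by auto
      define c where "c = int d - int t"
      define \<pi> where "\<pi> = gm d c s"
      have sp: "isperm d s" using s by (simp add: Av_def)
      have aff: "affine_perm d \<pi>" unfolding \<pi>_def by (rule gm_aff[OF dpos sp])
      have cut: "cut_point \<pi> c" unfolding \<pi>_def by (rule gm_cut[OF dpos sp])
      have w: "wl d \<pi> c = s" unfolding \<pi>_def by (rule gm_wl[OF dpos sp])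
      have c0: "0 \<le> c" "c < int d" using t by (auto simp: c_def)
      have "\<pi> \<in> ?P"
        using wl_av[OF aff dpos cut] wl_cuts[OF aff dpos cut] w s cs aff by (simp add: Av_def)
      moreover have "cmax d \<pi> = c"
      proof -
        have nt: "nat (int d - c) = t" using t by (simp add: c_def)
        have all: "\<forall>r. 0 \<le> r \<and> r < int d \<and> cut_point \<pi> r \<longrightarrow> r \<le> c"
          using wl_max[OF aff dpos cut c0] nl w nt by simp
        show ?thesis unfolding cmax_def
        proof (rule Max_eqI)
          show "finite {r\<in>{0..<int d}. cut_point \<pi> r}" by (rule finite_subset[of _ "{0..<int d}"]) auto
        qed (use all cut c0 in auto)
      qed
      ultimately show ?thesis using ts w t by (simp add: \<pi>_def c_def)
    qed
    show "\<forall>q\<in>?Q. ?f (?g q) = q" using gQ by blast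
    show "?g ` ?Q \<subseteq> ?P" using gQ by blast
  qed
qed

theorem theorem4p2:
  fixes d k :: nat
  assumes "1 \<le> k" and "k \<le> d"
  shows "card {\<pi>. affine_perm d \<pi> \<and> avoids312 \<pi> \<and> num_cut_points d \<pi> = k}
         = (2 * d - k - 1) choose (d - 1)"
proof -
  have dpos: "0 < d" and d1: "1 \<le> d" using assms by auto
  have "card {\<pi>. affine_perm d \<pi> \<and> avoids312 \<pi> \<and> num_cut_points d \<pi> = k}
    = card {(t,s). t \<in> {1..d} \<and> s \<in> Av d \<and> cuts s = k \<and> (\<forall>j\<in>{1..<t}. \<not> lcut s j)}"
    by (rule bijPQ[OF dpos assms(1)])
  also have "\<dots> = (\<Sum>p=1..d. p * card (Av (p-1)) * card {b\<in>Av (d-p). cuts b = k - 1})"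
    by (rule Qcount[OF d1 assms(1)])
  also have "\<dots> = (2 * d - k - 1) choose (d - 1)"
    by (rule fps_count[where A="\<lambda>n. card (Av n)" and F="\<lambda>n k. card {b\<in>Av n. cuts b = k}"])
       (use A0 AS F0 FS assms in auto)
  finally show ?thesis .
qed


end
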